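(* Let $\Sigma$ be a graded alphabet and $t\in T_\Sigma$. Then the subtree automaton $A_t$ of $t$ realizes the subtree series of $t$: $\mathbb{P}_{A_t}=\mathrm{SubTreeSeries}_t$.
   Context: A graded alphabet is a finite set $\Sigma=\bigcup_{k\in\mathbb{N}}\Sigma_k$; $T_\Sigma$ is the set of trees $f(t_1,\ldots,t_k)$ with $f\in\Sigma_k$. Weights are in the monoid $(\mathbb{N},+)$. A RWTA is $A=(\Sigma,Q,\nu,\delta)$ with $Q$ finite, $\nu:Q\to\mathbb{N}$, $\delta\subseteq\bigcup_k Q\times\Sigma_k\times Q^k$; $\delta(f,q_1,\ldots,q_k)=\{q\mid(q,f,q_1,\ldots,q_k)\in\delta\}$, extended to subsets by union over tuples; $\nu(S)=\sum_{s\in S}\nu(s)$; $\Delta(f(t_1,\ldots,t_k))=\delta(f,\Delta(t_1),\ldots,\Delta(t_k))$; $\mathbb{P}_A(t)=\nu(\Delta(t))$. For $t=f(t_1,\ldots,t_k)$, $\mathrm{SubTree}(t)=\{t\}\cup\bigcup_j\mathrm{SubTree}(t_j)$, and $\mathrm{SubTreeSeries}_t:T_\Sigma\to\mathbb{N}$ is defined inductively by $\mathrm{SubTreeSeries}_t=t+\sum_{1\le j\le k}\mathrm{SubTreeSeries}_{t_j}$ (i.e. $\mathrm{SubTreeSeries}_t(s)$ is the number of nodes of $t$ at which the subtree rooted there equals $s$). The tree $t^\sharp$ is obtained from $t$ by indexing each symbol occurrence with its position in a prefix (preorder) traversal, so all indexed symbols are distinct and keep their arity; $\Sigma_{t^\sharp}$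 is the set of indexed symbols occurring in $t^\sharp$, and $\mathrm{h}$ erases indices ($\mathrm{h}(t^\sharp)=t$). The subtree automaton of $t$ is $A_t=(\Sigma,Q,\nu,\delta)$ with $Q=\mathrm{SubTree}(t^\sharp)$, $\nu(q)=1$ for all $q\in Q$, and for $f\in\Sigma_{t^\sharp}$ of arity $k$ and $t_1,\ldots,t_{k+1}\in Q$: $t_{k+1}\in\delta(\mathrm{h}(f),t_1,\ldots,t_k)$ iff $t_{k+1}=f(t_1,\ldots,t_k)$. *)

theory Defs
  imports Main
begin

datatype 'f tree = Node 'f "'f tree list"

fun wf_tree :: "'f set \<Rightarrow> ('f \<Rightarrow> nat) \<Rightarrow> 'f tree \<Rightarrow> bool" where
  "wf_tree Sig ar (Node f ts) =
     (f \<in> Sig \<and> length ts = ar f \<and> (\<forall>u\<in>set ts. wf_tree Sig ar u))"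

definition graded_alphabet :: "'f set \<Rightarrow> ('f \<Rightarrow> nat) \<Rightarrow> bool" where
  "graded_alphabet Sig ar \<longleftrightarrow> finite Sig"

definition trees :: "'f set \<Rightarrow> ('f \<Rightarrow> nat) \<Rightarrow> 'f tree set" where
  "trees Sig ar = {t. wf_tree Sig ar t}"

fun subtrees :: "'f tree \<Rightarrow> 'f tree set" where
  "subtrees (Node f ts) = insert (Node f ts) (\<Union>u\<in>set ts. subtrees u)"

fun subtree_series :: "'f tree \<Rightarrow> 'f tree \<Rightarrow> nat" where
  "subtree_series (Node f ts) s =
     (if Node f ts = s then 1 else 0) + sum_list (map (\<lambda>u. subtree_series u s) ts)"

fun symbols :: "'f tree \<Rightarrow> 'f set" where
  "symbols (Node f ts) = insert f (\<Union>u\<in>set ts. symbols u)"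

fun tsize :: "'f tree \<Rightarrow> nat" where
  "tsize (Node f ts) = Suc (sum_list (map tsize ts))"

text \<open>idx n t indexes the symbols of t by their positions in a preorder
  traversal, starting with position n at the root.\<close>
fun idx :: "nat \<Rightarrow> 'f tree \<Rightarrow> ('f \<times> nat) tree"
  and idxs :: "nat \<Rightarrow> 'f tree list \<Rightarrow> ('f \<times> nat) tree list" where
  "idx n (Node f ts) = Node (f, n) (idxs (Suc n) ts)"
| "idxs n [] = []"
| "idxs n (u # us) = idx n u # idxs (n + tsize u) us"

definition sharp :: "'f tree \<Rightarrow> ('f \<times> nat) tree" where
  "sharp t = idx 1 t"

definition h :: "'f \<times> nat \<Rightarrow> 'f" where
  "h g = fst g"

record ('f, 'q) rwta =
  states :: "'q set"
  weight :: "'q \<Rightarrow> nat"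
  trans  :: "('q \<times> 'f \<times> 'q list) set"

definition delta_set :: "('q \<times> 'f \<times> 'q list) set \<Rightarrow> 'f \<Rightarrow> 'q set list \<Rightarrow> 'q set" where
  "delta_set \<delta> f Qs = {q. \<exists>qs. length qs = length Qs \<and>
      (\<forall>i<length Qs. qs ! i \<in> Qs ! i) \<and> (q, f, qs) \<in> \<delta>}"

fun Delta :: "('f, 'q) rwta \<Rightarrow> 'f tree \<Rightarrow> 'q set" where
  "Delta A (Node f ts) = delta_set (trans A) f (map (Delta A) ts)"

definition weight_of :: "('f, 'q) rwta \<Rightarrow> 'f tree \<Rightarrow> nat" where
  "weight_of A t = (\<Sum>q\<in>Delta A t. weight A q)"

definition subtree_automaton :: "'f tree \<Rightarrow> ('f, ('f \<times> nat) tree) rwta" where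
  "subtree_automaton t =
     \<lparr> states = subtrees (sharp t),
       weight = (\<lambda>q. 1),
       trans = {(Node g qs, h g, qs) | g qs.
                  g \<in> symbols (sharp t) \<and> set qs \<subseteq> subtrees (sharp t) \<and>
                  Node g qs \<in> subtrees (sharp t)} \<rparr>"

end

theory Submission
  imports Defs
begin

abbreviation erase :: "('f \<times> nat) tree \<Rightarrow> 'f tree" where
  "erase \<equiv> map_tree fst"

fun root :: "'a tree \<Rightarrow> 'a" where "root (Node g _) = g"

lemma subtrees_self: "T \<in> subtrees T"
  by (cases T) auto

lemma subtrees_trans: "x \<in> subtrees T \<Longrightarrow> subtrees x \<subseteq> subtrees T"
  by (induction T) auto

lemma subtrees_child: "Node g qs \<in> subtrees T \<Longrightarrow> set qs \<subseteq> subtrees T"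
  using subtrees_trans[of "Node g qs" T] subtrees_self by fastforce

lemma subtrees_sym: "Node g qs \<in> subtrees T \<Longrightarrow> g \<in> symbols T"
  by (induction T) auto

lemma finite_subtrees: "finite (subtrees T)"
  by (induction T) auto

lemma trans_iff: "(q, f, qs) \<in> trans (subtree_automaton t) \<longleftrightarrow>
  (\<exists>g. q = Node g qs \<and> fst g = f \<and> g \<in> symbols (sharp t) \<and> set qs \<subseteq> subtrees (sharp t) \<and> Node g qs \<in> subtrees (sharp t))"
  by (auto simp: subtree_automaton_def h_def)

lemma Delta_eq:
  "Delta (subtree_automaton t) s = {q \<in> subtrees (sharp t). erase q = s}"
proof (induction s)
  case (Node f ss)
  show ?case
  proof (intro set_eqI iffI)
    fix q assume "q \<in> Delta (subtree_automaton t) (Node f ss)"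
    then obtain qs where l: "length qs = length ss" and i: "\<forall>i<length ss. qs ! i \<in> Delta (subtree_automaton t) (ss ! i)"
      and tr: "(q, f, qs) \<in> trans (subtree_automaton t)"
      unfolding Delta.simps delta_set_def by fastforce
    from tr obtain g where q: "q = Node g (qs)" "fst g = f" "Node g qs \<in> subtrees (sharp t)"
      unfolding trans_iff by blast
    have "\<forall>i<length ss. erase (qs ! i) = ss ! i"
    proof (intro allI impI)
      fix i assume il: "i < length ss"
      hence "ss ! i \<in> set ss" by simp
      from Node.IH[OF this] i il show "erase (qs ! i) = ss ! i" by blast
    qed
    hence "map erase qs = ss" using l by (simp add: list_eq_iff_nth_eq)
    thus "q \<in> {q \<in> subtrees (sharp t). erase q = Node f ss}"
      using q by simp
  next
    fix q assume "q \<in> {q \<in> subtrees (sharp t). erase q = Node f ss}"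
    then obtain g qs where q: "q = Node g qs" "Node g qs \<in> subtrees (sharp t)"
      "fst g = f" "map erase qs = ss"
      by (cases q) auto
    have l: "length qs = length ss" using q(4) by auto
    have "\<forall>i<length ss. qs ! i \<in> Delta (subtree_automaton t) (ss ! i)"
    proof (intro allI impI)
      fix i
      assume il: "i < length ss"
      have "qs ! i \<in> set qs" using il l by simp
      hence "qs ! i \<in> subtrees (sharp t)" using subtrees_child[OF q(2)] by blast
      moreover have "erase (qs ! i) = ss ! i" using il l q(4) by (metis nth_map)
      moreover have "ss ! i \<in> set ss" using il by simp
      ultimately have "qs ! i \<in> subtrees (sharp t)" "erase (qs ! i) = ss ! i" "ss ! i \<in> set ss" by blast+
      thus "qs ! i \<in> Delta (subtree_automaton t) (ss ! i)" using Node.IH[OF \<open>ss ! i \<in> set ss\<close>] by blast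
    qed
    moreover have "(q, f, qs) \<in> trans (subtree_automaton t)"
      unfolding trans_iff using q subtrees_child[OF q(2)] subtrees_sym[OF q(2)] by blast
    ultimately show "q \<in> Delta (subtree_automaton t) (Node f ss)"
      using l unfolding Delta.simps delta_set_def
      by (intro CollectI exI[of _ qs]) simp
  qed
qed

lemma erase_idx:
  fixes t :: "'f tree" and us :: "'f tree list"
  shows "erase (idx n t) = t" "map erase (idxs n us) = us"
  by (induction n t and n us rule: idx_idxs.induct) auto

lemma range_idx:
  fixes t :: "'f tree" and us :: "'f tree list"
  shows "q \<in> subtrees (idx n t) \<Longrightarrow> snd (root q) \<in> {n..<n + tsize t}"
  "q \<in> (\<Union>u\<in>set (idxs n us). subtrees u) \<Longrightarrow> snd (root q) \<in> {n..<n + sum_list (map tsize us)}"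
proof (induction n t and n us arbitrary: q and q rule: idx_idxs.induct)
  case (1 n f ts)
  from 1(2) have "q = Node (f, n) (idxs (Suc n) ts) \<or> q \<in> (\<Union>u\<in>set (idxs (Suc n) ts). subtrees u)" by simp
  then show ?case
  proof
    assume "q \<in> (\<Union>u\<in>set (idxs (Suc n) ts). subtrees u)"
    from 1(1)[OF this] show ?case by simp
  qed simp
next
  case (2 n)
  then show ?case by simp
next
  case (3 n u us)
  from 3(3) have "q \<in> subtrees (idx n u) \<or> q \<in> (\<Union>u\<in>set (idxs (n + tsize u) us). subtrees u)" by simp
  then show ?case
  proof
    assume "q \<in> subtrees (idx n u)"
    from 3(1)[OF this] show ?case by simp
  next
    assume "q \<in> (\<Union>u\<in>set (idxs (n + tsize u) us). subtrees u)"
    from 3(2)[OF this] show ?case by simp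
  qed
qed

lemma count_idx:
  fixes t :: "'f tree" and us :: "'f tree list"
  shows "card {q \<in> subtrees (idx n t). erase q = s} = subtree_series t s"
  "card {q \<in> (\<Union>u\<in>set (idxs n us). subtrees u). erase q = s} = sum_list (map (\<lambda>u. subtree_series u s) us)"
proof (induction n t and n us rule: idx_idxs.induct)
  case (1 n f ts)
  let ?r = "Node (f, n) (idxs (Suc n) ts)"
  let ?R = "{q \<in> (\<Union>u\<in>set (idxs (Suc n) ts). subtrees u). erase q = s}"
  have nr: "?r \<notin> ?R" using range_idx(2)[of ?r "Suc n" ts] by auto
  have fin: "finite ?R"
    by (rule finite_subset[of _ "\<Union>u\<in>set (idxs (Suc n) ts). subtrees u"]) (auto simp: finite_subtrees)
  have er: "erase ?r = Node f ts" using erase_idx(1)[of n "Node f ts"] by simp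
  have eq: "{q \<in> subtrees (idx n (Node f ts)). erase q = s} =
     (if Node f ts = s then insert ?r ?R else ?R)"
    using er by auto
  show ?case using nr fin 1 eq by (simp add: card_insert_if)
next
  case (2 n)
  then show ?case by simp
next
  case (3 n u us)
  let ?A = "{q \<in> subtrees (idx n u). erase q = s}"
  let ?B = "{q \<in> (\<Union>u\<in>set (idxs (n + tsize u) us). subtrees u). erase q = s}"
  have eq: "{q \<in> (\<Union>u\<in>set (idxs n (u # us)). subtrees u). erase q = s} = ?A \<union> ?B"
    by auto
  have d: "?A \<inter> ?B = {}"
  proof (rule ccontr)
    assume "?A \<inter> ?B \<noteq> {}"
    then obtain q where "q \<in> ?A" "q \<in> ?B" by blast
    hence "snd (root q) < n + tsize u" "snd (root q) \<ge> n + tsize u"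
      using range_idx(1)[of q n u] range_idx(2)[of q "n + tsize u" us] by auto
    thus False by simp
  qed
  have fA: "finite ?A" by (simp add: finite_subtrees)
  have fB: "finite ?B"
    by (rule finite_subset[of _ "\<Union>u\<in>set (idxs (n + tsize u) us). subtrees u"]) (auto simp: finite_subtrees)
  show ?case using eq d 3 fA fB by (simp add: card_Un_disjoint)
qed

theorem lemma6:
  fixes Sig :: "'f set" and ar :: "'f \<Rightarrow> nat" and t :: "'f tree"
  assumes "graded_alphabet Sig ar"
    and "t \<in> trees Sig ar"
  shows "\<forall>s \<in> trees Sig ar. weight_of (subtree_automaton t) s = subtree_series t s"
proof
  fix s
  have "weight_of (subtree_automaton t) s = card (Delta (subtree_automaton t) s)"
    by (simp add: weight_of_def subtree_automaton_def)
  also have "\<dots> = subtree_series t s"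
    unfolding Delta_eq[of t s] sharp_def using count_idx(1)[of 1 t s] by simp
  finally show "weight_of (subtree_automaton t) s = subtree_series t s" .
qed

end
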